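(* Let $a$ be a real number with $|a|<1$, let $n$ be a real number and $i$ a nonnegative integer, and put $\Theta(\varphi)=\dfrac{1+a^2-2a\cos\varphi}{1-a^2}$. Then $$\binom{n}{i}\int_0^{\pi}\frac{\cos(i\varphi)}{\Theta(\varphi)^{n+1}}\,d\varphi=\binom{-n-1}{i}\int_0^{\pi}\Theta(\varphi)^{n}\cos(i\varphi)\,d\varphi .$$
   Context: For a real number $m$ and a nonnegative integer $k$, $\binom{m}{k}=\frac{m(m-1)\cdots(m-k+1)}{k!}$ is the coefficient of $v^k$ in the binomial expansion of $(1+v)^m$. *)

theory Defs
  imports "HOL-Analysis.Analysis"
begin

definition Theta :: "real \<Rightarrow> real \<Rightarrow> real" where
  "Theta a \<phi> = (1 + a^2 - 2 * a * cos \<phi>) / (1 - a^2)"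

end

theory Submission
  imports Defs
begin


lemma a2: "\<bar>a\<bar> < 1 \<Longrightarrow> 1 - a^2 > (0::real)"
  using abs_square_less_1[of a] by simp

definition cc :: "real \<Rightarrow> real" where "cc a = (1 + a^2) / (1 - a^2)"
definition bb :: "real \<Rightarrow> real" where "bb a = 2 * a / (1 - a^2)"
definition JJ :: "real \<Rightarrow> real \<Rightarrow> nat \<Rightarrow> real" where
  "JJ a p j = integral {0..pi} (\<lambda>\<phi>. Theta a \<phi> powr p * cos (real j * \<phi>))"

lemma Theta_cb: "\<bar>a\<bar> < 1 \<Longrightarrow> Theta a x = cc a - bb a * cos x"
proof -
  assume "\<bar>a\<bar> < 1"
  then have "1 - a^2 \<noteq> 0" using a2 by force
  then show ?thesis unfolding Theta_def cc_def bb_def by (simp add: diff_divide_distrib)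
qed

lemma cb_sq: "\<bar>a\<bar> < 1 \<Longrightarrow> (cc a)^2 - (bb a)^2 = 1"
proof -
  assume "\<bar>a\<bar> < 1"
  then have "1 - a^2 \<noteq> 0" using a2 by force
  moreover have "(1 + a^2)^2 - (2*a)^2 = (1 - a^2)^2" by algebra
  ultimately show ?thesis unfolding cc_def bb_def by (simp add: power_divide diff_divide_distrib[symmetric])
qed

lemma cb_pos: assumes "\<bar>a\<bar> < 1" shows "cc a - \<bar>bb a\<bar> > 0"
proof -
  have h: "1 - a^2 > 0" using assms a2 by blast
  have "cc a - \<bar>bb a\<bar> = (1 - \<bar>a\<bar>)^2 / (1 - a^2)"
    using h unfolding cc_def bb_def by (simp add: field_simps abs_mult power2_eq_square abs_if) 
  moreover have "(1 - \<bar>a\<bar>)^2 > 0" using assms by simp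
  ultimately show ?thesis using h by simp
qed

lemma cb_cos_pos: assumes "\<bar>a\<bar> < 1" shows "cc a + bb a * cos x > 0" "cc a - bb a * cos x > 0"
proof -
  have "\<bar>bb a * cos x\<bar> \<le> \<bar>bb a\<bar>" by (simp add: abs_mult mult_left_le)
  then show "cc a + bb a * cos x > 0" "cc a - bb a * cos x > 0" using cb_pos[OF assms] by linarith+
qed

lemma Theta_pos: "\<bar>a\<bar> < 1 \<Longrightarrow> Theta a x > 0"
  using Theta_cb cb_cos_pos by simp

lemma JJ_has: assumes "\<bar>a\<bar> < 1"
  shows "((\<lambda>\<phi>. (cc a - bb a * cos \<phi>) powr p * cos (real j * \<phi>)) has_integral JJ a p j) {0..pi}"
proof -
  have "continuous_on {0..pi} (\<lambda>\<phi>. (cc a - bb a * cos \<phi>) powr p * cos (real j * \<phi>))"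
    using cb_cos_pos(2)[OF assms] by (intro continuous_intros) (metis less_irrefl)
  then have "(\<lambda>\<phi>. (cc a - bb a * cos \<phi>) powr p * cos (real j * \<phi>)) integrable_on {0..pi}"
    by (rule integrable_continuous_interval)
  then show ?thesis unfolding JJ_def Theta_cb[OF assms] by (rule integrable_integral)
qed

lemma JJ_rec: assumes "\<bar>a\<bar> < 1"
  shows "(bb a/2)*(real k+p+2) * JJ a p (k+2) = (real k+1)*cc a*JJ a p (k+1) + (bb a/2)*(p - real k) * JJ a p k"
proof -
  define c where "c = cc a"
  define b where "b = bb a"
  define T where "T = (\<lambda>\<phi>. c - b * cos \<phi>)"
  have Tpos: "\<And>x. T x > 0" unfolding T_def c_def b_def using cb_cos_pos[OF assms] by auto
  define F where "F = (\<lambda>\<phi>. T \<phi> powr (p+1) * sin (real (Suc k) * \<phi>))"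
  define F' where "F' = (\<lambda>\<phi>. (p+1) * T \<phi> powr p * (b * sin \<phi>) * sin (real (Suc k) * \<phi>)
        + T \<phi> powr (p+1) * (real (Suc k) * cos (real (Suc k) * \<phi>)))"
  have der: "(F has_vector_derivative F' x) (at x)" for x
  proof -
    have "(F has_real_derivative F' x) (at x)"
      unfolding F_def F'_def T_def using Tpos[of x, unfolded T_def]
      by (auto intro!: derivative_eq_intros simp: powr_diff field_simps)
    then show ?thesis by (simp add: has_real_derivative_iff_has_vector_derivative)
  qed
  have contF: "continuous_on {0..pi} F"
    unfolding F_def T_def using Tpos[unfolded T_def] by (intro continuous_intros) (metis less_irrefl)
  have F0: "F pi - F 0 = 0" unfolding F_def using sin_npi[of "Suc k"] by (simp del: of_nat_Suc)
  have I1: "(F' has_integral 0) {0..pi}"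
    using fundamental_theorem_of_calculus_interior[OF _ contF der] F0 by simp
  have Feq: "F' x = (p+1)*(b/2)*(T x powr p * cos (real k * x) - T x powr p * cos (real (k+2) * x))
      + (real k + 1)*c*(T x powr p * cos (real (k+1) * x))
      - (real k + 1)*(b/2)*(T x powr p * cos (real k * x) + T x powr p * cos (real (k+2) * x))" for x
  proof -
    have e1: "cos (real k * x) = cos (real (Suc k) * x - x)" by (simp add: algebra_simps)
    have e2: "cos (real (k+2) * x) = cos (real (Suc k) * x + x)" by (simp add: algebra_simps)
    have e3: "T x powr (p+1) = T x powr p * (c - b * cos x)"
      using Tpos[of x] by (simp add: powr_add T_def)
    show ?thesis unfolding F'_def e1 e2 e3 cos_add cos_diff
      by (simp add: field_simps)
  qed
  have Hk: "((\<lambda>\<phi>. T \<phi> powr p * cos (real j * \<phi>)) has_integral JJ a p j) {0..pi}" for j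
    using JJ_has[OF assms] unfolding T_def c_def b_def .
  have I2: "(F' has_integral ((p+1)*(b/2)*(JJ a p k - JJ a p (k+2))
      + (real k + 1)*c*JJ a p (k+1) - (real k + 1)*(b/2)*(JJ a p k + JJ a p (k+2)))) {0..pi}"
    unfolding Feq[abs_def]
    by (intro has_integral_add has_integral_diff has_integral_mult_right Hk)
  have "(p+1)*(b/2)*(JJ a p k - JJ a p (k+2))
      + (real k + 1)*c*JJ a p (k+1) - (real k + 1)*(b/2)*(JJ a p k + JJ a p (k+2)) = 0"
    using has_integral_unique[OF I1 I2] by simp
  then show ?thesis unfolding c_def[symmetric] b_def[symmetric] by (simp add: field_simps)
qed

lemma JJ_alg: assumes "\<bar>a\<bar> < 1"
  shows "JJ a n 1 = cc a * JJ a (n-1) 1 - (bb a/2) * (JJ a (n-1) 0 + JJ a (n-1) 2)"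
proof -
  define c where "c = cc a"
  define b where "b = bb a"
  define T where "T = (\<lambda>\<phi>. c - b * cos \<phi>)"
  have Tpos: "\<And>x. T x > 0" unfolding T_def c_def b_def using cb_cos_pos[OF assms] by auto
  have Hk: "((\<lambda>\<phi>. T \<phi> powr q * cos (real j * \<phi>)) has_integral JJ a q j) {0..pi}" for j q
    using JJ_has[OF assms] unfolding T_def c_def b_def .
  have eq: "T x powr n * cos (real 1 * x) = c * (T x powr (n-1) * cos (real 1 * x))
     - (b/2) * (T x powr (n-1) * cos (real 0 * x) + T x powr (n-1) * cos (real 2 * x))" for x
  proof -
    have e1: "T x powr n = T x powr (n-1) * T x" using Tpos[of x] by (simp add: powr_diff)
    have e2: "cos (real 2 * x) = 2 * cos x * cos x - 1" by (simp add: cos_double_cos power2_eq_square)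
    show ?thesis unfolding e1 e2 by (simp add: T_def algebra_simps)
  qed
  have "((\<lambda>\<phi>. T \<phi> powr n * cos (real 1 * \<phi>)) has_integral
     (c * JJ a (n-1) 1 - (b/2) * (JJ a (n-1) 0 + JJ a (n-1) 2))) {0..pi}"
    unfolding eq by (intro has_integral_add has_integral_diff has_integral_mult_right Hk)
  from has_integral_unique[OF Hk this] show ?thesis unfolding c_def b_def .
qed



lemma subst_lemma:
  fixes f :: "real \<Rightarrow> real"
  assumes a: "\<bar>a\<bar> < 1" and fc: "continuous_on UNIV f"
  shows "integral {0..pi} (\<lambda>\<psi>. f (cos \<psi>) * (cc a - bb a * cos \<psi>) powr (-m-1))
       = integral {0..pi} (\<lambda>x. f ((cc a * cos x + bb a)/(cc a + bb a * cos x)) * (cc a + bb a * cos x) powr m)"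
proof -
  define c where "c = cc a"
  define b where "b = bb a"
  define D where "D = (\<lambda>x. c + b * cos x)"
  define w where "w = (\<lambda>x. (c * cos x + b) / D x)"
  define g where "g = (\<lambda>x. arccos (w x))"
  define F where "F = (\<lambda>\<psi>. f (cos \<psi>) * (c - b * cos \<psi>) powr (-m-1))"
  have Dpos: "D x > 0" for x unfolding D_def c_def b_def using cb_cos_pos[OF a] by auto
  have Mpos: "c - b * cos x > 0" for x unfolding c_def b_def using cb_cos_pos[OF a] by auto
  have cbsq: "c*c = 1 + b*b" using cb_sq[OF a] unfolding c_def b_def power2_eq_square by simp
  have cmb: "c - b > 0" "c + b > 0" using cb_pos[OF a] unfolding c_def b_def by linarith+
  have wm1: "w x - 1 = (c - b) * (cos x - 1) / D x" for x
    using Dpos[of x] unfolding w_def D_def by (simp add: field_simps)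
  have wp1: "w x + 1 = (c + b) * (cos x + 1) / D x" for x
    using Dpos[of x] unfolding w_def D_def by (simp add: field_simps)
  have wle: "-1 \<le> w x \<and> w x \<le> 1" for x
  proof -
    have "(c - b) * (cos x - 1) / D x \<le> 0"
      by (intro divide_nonpos_pos mult_nonneg_nonpos) (use cmb Dpos[of x] in auto)
    moreover have "(c + b) * (cos x + 1) / D x \<ge> 0"
      by (intro divide_nonneg_pos mult_nonneg_nonneg) (use cmb Dpos[of x] cos_ge_minus_one[of x] in \<open>auto simp del: cos_ge_minus_one\<close>)
    ultimately show ?thesis using wm1[of x] wp1[of x] by linarith
  qed
  have wlt: "-1 < w x \<and> w x < 1" if "x \<in> {0<..<pi}" for x
  proof -
    have "cos x < 1" "cos x > -1" using that cos_monotone_0_pi[of 0 x] cos_monotone_0_pi[of x pi]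
      by auto
    then have "(c - b) * (cos x - 1) / D x < 0" "(c + b) * (cos x + 1) / D x > 0" using cmb Dpos[of x]
      by (auto intro!: divide_neg_pos mult_pos_neg divide_pos_pos)
    then show ?thesis using wm1[of x] wp1[of x] by linarith
  qed
  have contD: "continuous_on UNIV D" unfolding D_def by (intro continuous_intros)
  have contw: "continuous_on UNIV w" unfolding w_def using Dpos
    by (intro continuous_intros contD) (metis less_irrefl)
  have contg: "continuous_on {0..pi} g" unfolding g_def
    by (intro continuous_intros continuous_on_subset[OF contw]) (auto simp: wle)
  have contF: "continuous_on {0..pi} F" unfolding F_def using Mpos
    by (intro continuous_intros continuous_on_compose2[OF fc]) (force, metis less_irrefl)
  have g0: "g 0 = 0" unfolding g_def w_def D_def using cmb by simp
  have gpi: "g pi = pi"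
  proof -
    have "(c * cos pi + b) / (c + b * cos pi) = -1" using cmb by (simp add: field_simps)
    then show ?thesis unfolding g_def w_def D_def by simp
  qed
  have grange: "g ` {0..pi} \<subseteq> {0..pi}" unfolding g_def
    using wle arccos_lbound arccos_ubound by auto
  have gder: "(g has_field_derivative 1 / D x) (at x within {0..pi})" if "x \<in> {0..pi} - {0, pi}" for x
  proof -
    have x: "x \<in> {0<..<pi}" using that by auto
    then have sx: "sin x > 0" by (simp add: sin_gt_zero)
    have wd: "(w has_real_derivative - sin x / (D x)^2) (at x)"
      unfolding w_def D_def using Dpos[of x, unfolded D_def]
      apply (auto intro!: derivative_eq_intros)
      apply (simp add: field_simps power2_eq_square)
      using cbsq by algebra
    have sq: "1 - (w x)^2 = (sin x / D x)^2"
    proof -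
      have "(D x)^2 - (c * cos x + b)^2 = (sin x)^2"
        unfolding D_def using cbsq sin_cos_squared_add[of x] by algebra
      moreover have "1 - (w x)^2 = ((D x)^2 - (c * cos x + b)^2) / (D x)^2"
        unfolding w_def using Dpos[of x] by (simp add: power_divide field_simps)
      ultimately show ?thesis by (simp add: power_divide)
    qed
    have sqr: "sqrt (1 - (w x)^2) = sin x / D x" unfolding sq using sx Dpos[of x] by simp
    have "(g has_real_derivative inverse (- sqrt (1 - (w x)^2)) * (- sin x / (D x)^2)) (at x)"
      unfolding g_def using DERIV_chain2[OF DERIV_arccos wd] wlt[OF x] by auto
    moreover have "inverse (- sqrt (1 - (w x)^2)) * (- sin x / (D x)^2) = 1 / D x"
      unfolding sqr using sx Dpos[of x] by (simp add: field_simps power2_eq_square)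
    ultimately show ?thesis by (simp add: has_field_derivative_at_within)
  qed
  have S: "((\<lambda>x. (1 / D x) *\<^sub>R F (g x)) has_integral integral {g 0..g pi} F) {0..pi}"
    by (rule has_integral_substitution_strong[of "{0,pi}" 0 pi g 0 pi F])
       (use g0 gpi grange contF contg gder in auto)
  have eq: "(1 / D x) *\<^sub>R F (g x) = f (w x) * D x powr m" for x
  proof -
    have cg: "cos (g x) = w x" unfolding g_def using wle by (simp add: cos_arccos)
    have "c - b * w x = 1 / D x" unfolding w_def using Dpos[of x] cbsq
      by (simp add: field_simps D_def)
    then have "(c - b * cos (g x)) powr (-m-1) = D x powr (m+1)"
      using Dpos[of x] powr_minus_divide[of "D x" "m+1"] by (simp add: cg powr_divide)
    then show ?thesis unfolding F_def using Dpos[of x]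
      by (simp add: cg powr_add)
  qed
  have S': "((\<lambda>x. f (w x) * D x powr m) has_integral integral {0..pi} F) {0..pi}"
    using S unfolding eq g0 gpi .
  show ?thesis using integral_unique[OF S'] unfolding F_def w_def D_def c_def b_def
    by simp
qed



lemma reflect_pi:
  fixes h :: "real \<Rightarrow> real"
  assumes "continuous_on {0..pi} h"
  shows "integral {0..pi} (\<lambda>x. h (pi - x)) = integral {0..pi} h"
proof -
  have "((\<lambda>x. (-1) *\<^sub>R h (pi - x)) has_integral (integral {pi - 0..pi - pi} h - integral {pi - pi..pi - 0} h)) {0..pi}"
    by (rule has_integral_substitution_general[of "{}" 0 pi "\<lambda>x. pi - x" 0 pi h "\<lambda>_. -1"])
       (auto intro!: assms continuous_intros derivative_eq_intros)
  then have "((\<lambda>x. - h (pi - x)) has_integral (- integral {0..pi} h)) {0..pi}"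
    by simp
  from has_integral_neg[OF this] show ?thesis by (simp add: integral_unique)
qed

lemma alg_u:
  fixes B0 B1 B2 K0 K1 K2 n k b c :: real
  assumes "(k+1)*B1 = (n-k)*B0" "(k+2)*B2 = (n-k-1)*B1"
    "(b/2)*(k - n + 1)*K2 = (k+1)*c*K1 + (b/2)*(-n-1-k)*K0"
  shows "-(b/2)*(k+1)*(k+2)*(B2*K2) = (k+1)^2*c*(B1*K1) - (b/2)*(k+1+n)*(n-k)*(B0*K0)"
proof -
  have "-(b/2)*(k+1)*(k+2)*(B2*K2) = -(b/2)*(k+1)*K2*((k+2)*B2)" by (simp add: field_simps)
  also have "\<dots> = -(b/2)*(k+1)*K2*((n-k-1)*B1)" using assms(2) by simp
  also have "\<dots> = (k+1)*B1*((b/2)*(k - n + 1)*K2)" by (simp add: field_simps)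
  also have "\<dots> = (k+1)*B1*((k+1)*c*K1 + (b/2)*(-n-1-k)*K0)" using assms(3) by simp
  also have "\<dots> = (k+1)^2*c*(B1*K1) + (b/2)*(-n-1-k)*K0*((k+1)*B1)" by (simp add: algebra_simps power2_eq_square)
  also have "\<dots> = (k+1)^2*c*(B1*K1) + (b/2)*(-n-1-k)*K0*((n-k)*B0)" using assms(1) by simp
  also have "\<dots> = (k+1)^2*c*(B1*K1) - (b/2)*(k+1+n)*(n-k)*(B0*K0)" by (simp add: field_simps)
  finally show ?thesis .
qed

lemma alg_v:
  fixes C0 C1 C2 L0 L1 L2 n k b c :: real
  assumes "(k+1)*C1 = (-n-1-k)*C0" "(k+2)*C2 = (-n-2-k)*C1"
    "(b/2)*(k+n+2)*L2 = (k+1)*c*L1 + (b/2)*(n-k)*L0"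
  shows "-(b/2)*(k+1)*(k+2)*(C2*L2) = (k+1)^2*c*(C1*L1) - (b/2)*(k+1+n)*(n-k)*(C0*L0)"
proof -
  have "-(b/2)*(k+1)*(k+2)*(C2*L2) = -(b/2)*(k+1)*L2*((k+2)*C2)" by (simp add: field_simps)
  also have "\<dots> = -(b/2)*(k+1)*L2*((-n-2-k)*C1)" using assms(2) by simp
  also have "\<dots> = (k+1)*C1*((b/2)*(k+n+2)*L2)" by (simp add: field_simps)
  also have "\<dots> = (k+1)*C1*((k+1)*c*L1 + (b/2)*(n-k)*L0)" using assms(3) by simp
  also have "\<dots> = (k+1)^2*c*(C1*L1) + (b/2)*(n-k)*L0*((k+1)*C1)" by (simp add: algebra_simps power2_eq_square)
  also have "\<dots> = (k+1)^2*c*(C1*L1) + (b/2)*(n-k)*L0*((-n-1-k)*C0)" using assms(1) by simp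
  also have "\<dots> = (k+1)^2*c*(C1*L1) - (b/2)*(k+1+n)*(n-k)*(C0*L0)" by (simp add: field_simps)
  finally show ?thesis .
qed

lemma gchoose_step: "(real k + 1) * (x gchoose (Suc k)) = (x - real k) * (x gchoose k)"
  using gbinomial_mult_1[of x k] by (simp add: field_simps)



lemma base0: assumes a: "\<bar>a\<bar> < 1" shows "JJ a (-n-1) 0 = JJ a n 0"
proof -
  have "JJ a (-n-1) 0 = integral {0..pi} (\<lambda>\<psi>. (\<lambda>_. 1::real) (cos \<psi>) * (cc a - bb a * cos \<psi>) powr (-n-1))"
    unfolding JJ_def Theta_cb[OF a] by simp
  also have "\<dots> = integral {0..pi} (\<lambda>x. (\<lambda>_. 1::real) ((cc a * cos x + bb a)/(cc a + bb a * cos x)) * (cc a + bb a * cos x) powr n)"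
    by (rule subst_lemma[OF a]) (rule continuous_on_const)
  also have "\<dots> = integral {0..pi} (\<lambda>x. (\<lambda>x. (cc a - bb a * cos x) powr n) (pi - x))"
    by simp
  also have "\<dots> = integral {0..pi} (\<lambda>x. (cc a - bb a * cos x) powr n)"
    using cb_cos_pos(2)[OF a]
    by (intro reflect_pi, intro continuous_intros) (metis less_irrefl)
  also have "\<dots> = JJ a n 0" unfolding JJ_def Theta_cb[OF a] by simp
  finally show ?thesis .
qed

lemma base1: assumes a: "\<bar>a\<bar> < 1" shows "n * JJ a (-n-1) 1 = -(n+1) * JJ a n 1"
proof -
  define c where "c = cc a"
  define b where "b = bb a"
  have Dpos: "c + b * cos x > 0" for x unfolding c_def b_def using cb_cos_pos[OF a] by auto
  have Mpos: "c - b * cos x > 0" for x unfolding c_def b_def using cb_cos_pos[OF a] by auto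
  have "JJ a (-n-1) 1 = integral {0..pi} (\<lambda>\<psi>. (\<lambda>t. t) (cos \<psi>) * (cc a - bb a * cos \<psi>) powr (-n-1))"
    unfolding JJ_def Theta_cb[OF a] by (simp add: mult.commute)
  also have "\<dots> = integral {0..pi} (\<lambda>x. (\<lambda>t. t) ((cc a * cos x + bb a)/(cc a + bb a * cos x)) * (cc a + bb a * cos x) powr n)"
    by (rule subst_lemma[OF a]) (rule continuous_on_id)
  also have "\<dots> = integral {0..pi} (\<lambda>x. (\<lambda>x. (b - c * cos x) * (c - b * cos x) powr (n-1)) (pi - x))"
  proof (rule integral_cong)
    fix x
    have "(c + b * cos x) powr n = (c + b * cos x) powr (n-1) * (c + b * cos x)"
      using Dpos[of x] by (simp add: powr_diff)
    then show "(\<lambda>t. t) ((cc a * cos x + bb a)/(cc a + bb a * cos x)) * (cc a + bb a * cos x) powr n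
      = (\<lambda>x. (b - c * cos x) * (c - b * cos x) powr (n-1)) (pi - x)"
      using Dpos[of x] unfolding c_def[symmetric] b_def[symmetric] by (simp add: field_simps)
  qed
  also have "\<dots> = integral {0..pi} (\<lambda>x. (b - c * cos x) * (c - b * cos x) powr (n-1))"
    using Mpos
    by (intro reflect_pi, intro continuous_intros) (metis less_irrefl)
  also have "\<dots> = b * JJ a (n-1) 0 - c * JJ a (n-1) 1"
  proof -
    have H: "((\<lambda>\<phi>. (c - b * cos \<phi>) powr q * cos (real j * \<phi>)) has_integral JJ a q j) {0..pi}" for j q
      using JJ_has[OF a] unfolding c_def b_def .
    have "((\<lambda>x. b * ((c - b * cos x) powr (n-1) * cos (real 0 * x)) - c * ((c - b * cos x) powr (n-1) * cos (real 1 * x)))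
       has_integral (b * JJ a (n-1) 0 - c * JJ a (n-1) 1)) {0..pi}"
      by (intro has_integral_diff has_integral_mult_right H)
    moreover have "(\<lambda>x. b * ((c - b * cos x) powr (n-1) * cos (real 0 * x)) - c * ((c - b * cos x) powr (n-1) * cos (real 1 * x)))
       = (\<lambda>x. (b - c * cos x) * (c - b * cos x) powr (n-1))" by (auto simp: field_simps)
    ultimately show ?thesis by (simp add: integral_unique)
  qed
  finally have K1: "JJ a (-n-1) 1 = b * JJ a (n-1) 0 - c * JJ a (n-1) 1" .
  have A: "JJ a n 1 = c * JJ a (n-1) 1 - (b/2) * (JJ a (n-1) 0 + JJ a (n-1) 2)"
    using JJ_alg[OF a, of n] unfolding c_def b_def .
  have R: "(b/2)*(real 0+(n-1)+2) * JJ a (n-1) (0+2) = (real 0+1)*c*JJ a (n-1) (0+1) + (b/2)*((n-1) - real 0) * JJ a (n-1) 0"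
    using JJ_rec[OF a, where p="n-1" and k=0] unfolding c_def b_def .
  show ?thesis unfolding K1 A using R by (simp add: field_simps numeral_2_eq_2)
qed



theorem mainTheorem3:
  fixes a n :: real and i :: nat
  assumes "\<bar>a\<bar> < 1"
  shows "(n gchoose i) * integral {0..pi} (\<lambda>\<phi>. cos (real i * \<phi>) / (Theta a \<phi>) powr (n + 1))
       = ((- n - 1) gchoose i) * integral {0..pi} (\<lambda>\<phi>. (Theta a \<phi>) powr n * cos (real i * \<phi>))"
proof -
  note a = assms
  have I1: "integral {0..pi} (\<lambda>\<phi>. cos (real i * \<phi>) / (Theta a \<phi>) powr (n + 1)) = JJ a (-n-1) i"
    unfolding JJ_def
  proof (rule integral_cong)
    fix x
    have "Theta a x powr (-n-1) = 1 / Theta a x powr (n+1)"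
      using powr_minus_divide[of "Theta a x" "n+1"] by simp
    then show "cos (real i * x) / Theta a x powr (n + 1) = Theta a x powr (- n - 1) * cos (real i * x)"
      by simp
  qed
  have I2: "integral {0..pi} (\<lambda>\<phi>. (Theta a \<phi>) powr n * cos (real i * \<phi>)) = JJ a n i"
    unfolding JJ_def ..
  define uu where "uu = (\<lambda>j. (n gchoose j) * JJ a (-n-1) j)"
  define vv where "vv = (\<lambda>j. ((-n-1) gchoose j) * JJ a n j)"
  have "uu i = vv i"
  proof (cases "bb a = 0")
    case True
    have cpos: "cc a > 0" using cb_pos[OF a] by simp
    have z: "JJ a p (Suc k) = 0" for p k
    proof -
      have "(real k+1)*cc a*JJ a p (k+1) = 0" using JJ_rec[OF a, where p=p and k=k] True by simp
      then show ?thesis using cpos by simp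
    qed
    show ?thesis
    proof (cases i)
      case 0 then show ?thesis unfolding uu_def vv_def using base0[OF a] by simp
    next
      case (Suc k) then show ?thesis unfolding uu_def vv_def using z by simp
    qed
  next
    case False
    define b where "b = bb a"
    define c where "c = cc a"
    have b0: "b \<noteq> 0" using False b_def by simp
    have ru: "-(b/2)*(real k+1)*(real k+2)* uu (k+2) = (real k+1)^2*c* uu (k+1) - (b/2)*(real k+1+n)*(n-real k)* uu k" for k
    proof -
      have E1: "(real k+1)*(n gchoose (k+1)) = (n-real k)*(n gchoose k)"
        using gchoose_step[of k n] by simp
      have E2: "(real k+2)*(n gchoose (k+2)) = (n-real k-1)*(n gchoose (k+1))"
        using gchoose_step[of "Suc k" n] by (simp add: algebra_simps)
      have R: "(b/2)*(real k - n + 1)*JJ a (-n-1) (k+2) = (real k+1)*c*JJ a (-n-1) (k+1) + (b/2)*(-n-1-real k)*JJ a (-n-1) k"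
        using JJ_rec[OF a, where p="-n-1" and k=k] unfolding b_def c_def by (simp add: algebra_simps)
      show ?thesis using alg_u[OF E1 E2 R] unfolding uu_def .
    qed
    have rv: "-(b/2)*(real k+1)*(real k+2)* vv (k+2) = (real k+1)^2*c* vv (k+1) - (b/2)*(real k+1+n)*(n-real k)* vv k" for k
    proof -
      have E1: "(real k+1)*((-n-1) gchoose (k+1)) = (-n-1-real k)*((-n-1) gchoose k)"
        using gchoose_step[of k "-n-1"] by simp
      have E2: "(real k+2)*((-n-1) gchoose (k+2)) = (-n-2-real k)*((-n-1) gchoose (k+1))"
        using gchoose_step[of "Suc k" "-n-1"] by (simp add: algebra_simps)
      have R: "(b/2)*(real k + n + 2)*JJ a n (k+2) = (real k+1)*c*JJ a n (k+1) + (b/2)*(n-real k)*JJ a n k"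
        using JJ_rec[OF a, where p="n" and k=k] unfolding b_def c_def by (simp add: algebra_simps)
      show ?thesis using alg_v[OF E1 E2 R] unfolding vv_def .
    qed
    have "uu k = vv k \<and> uu (k+1) = vv (k+1)" for k
    proof (induction k)
      case 0
      show ?case unfolding uu_def vv_def using base0[OF a, of n] base1[OF a, of n] by simp
    next
      case (Suc k)
      have "-(b/2)*(real k+1)*(real k+2)* uu (k+2) = -(b/2)*(real k+1)*(real k+2)* vv (k+2)"
        using ru[of k] rv[of k] Suc.IH by simp
      then have "uu (k+2) = vv (k+2)" using b0 by simp
      then show ?case using Suc.IH by simp
    qed
    then show ?thesis by blast
  qed
  then show ?thesis unfolding I1 I2 uu_def vv_def .
qed


end
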